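(* Let $n\ge 6$ and let $G$ be a simple graph on $n$ vertices that contains no cycle having two chords incident to a common vertex. Then $|E(G)|\le 3n-9$. Moreover, if $G$ is bipartite, then $|E(G)|=3n-9$ if and only if $G\cong K_{3,n-3}$.
   Context: For a cycle $C$ in $G$, a chord is an edge of $G$ joining two vertices of $C$ that is not an edge of $C$. $K_{3,n-3}$ is the complete bipartite graph with parts of sizes $3$ and $n-3$. *)

theory Defs
  imports Main
begin

definition simple_graph :: "'a set \<Rightarrow> 'a set set \<Rightarrow> bool" where
  "simple_graph V E \<longleftrightarrow> finite V \<and> (\<forall>e\<in>E. e \<subseteq> V \<and> card e = 2)"

definition cycle_edges :: "'a list \<Rightarrow> 'a set set" where
  "cycle_edges cs = {{cs ! i, cs ! ((i + 1) mod length cs)} | i. i < length cs}"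

definition is_cycle :: "'a set \<Rightarrow> 'a set set \<Rightarrow> 'a list \<Rightarrow> bool" where
  "is_cycle V E cs \<longleftrightarrow> length cs \<ge> 3 \<and> distinct cs \<and> set cs \<subseteq> V \<and>
     cycle_edges cs \<subseteq> E"

definition is_chord :: "'a set set \<Rightarrow> 'a list \<Rightarrow> 'a set \<Rightarrow> bool" where
  "is_chord E cs e \<longleftrightarrow> e \<in> E \<and> e \<subseteq> set cs \<and> e \<notin> cycle_edges cs"

definition has_cycle_two_adjacent_chords :: "'a set \<Rightarrow> 'a set set \<Rightarrow> bool" where
  "has_cycle_two_adjacent_chords V E \<longleftrightarrow>
     (\<exists>cs e1 e2 v. is_cycle V E cs \<and> is_chord E cs e1 \<and> is_chord E cs e2 \<and>
        e1 \<noteq> e2 \<and> v \<in> e1 \<and> v \<in> e2)"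

definition bipartite :: "'a set \<Rightarrow> 'a set set \<Rightarrow> bool" where
  "bipartite V E \<longleftrightarrow> (\<exists>A B. A \<union> B = V \<and> A \<inter> B = {} \<and>
     (\<forall>e\<in>E. \<exists>a\<in>A. \<exists>b\<in>B. e = {a, b}))"

definition graph_iso :: "'a set \<Rightarrow> 'a set set \<Rightarrow> 'b set \<Rightarrow> 'b set set \<Rightarrow> bool" where
  "graph_iso V E V' E' \<longleftrightarrow> (\<exists>f. bij_betw f V V' \<and>
     (\<forall>u\<in>V. \<forall>v\<in>V. {u, v} \<in> E \<longleftrightarrow> {f u, f v} \<in> E'))"

definition Kbip_V :: "nat \<Rightarrow> nat \<Rightarrow> nat set" where
  "Kbip_V p q = {0..<p + q}"

definition Kbip_E :: "nat \<Rightarrow> nat \<Rightarrow> nat set set" where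
  "Kbip_E p q = {{i, j} | i j. i < p \<and> p \<le> j \<and> j < p + q}"

end

theory Submission
  imports Defs
begin


definition gpath :: "'a set \<Rightarrow> 'a set set \<Rightarrow> 'a list \<Rightarrow> bool" where
  "gpath V E p \<longleftrightarrow> p \<noteq> [] \<and> distinct p \<and> set p \<subseteq> V \<and> successively (\<lambda>x y. {x,y} \<in> E) p"

definition nbr :: "'a set set \<Rightarrow> 'a \<Rightarrow> 'a set" where
  "nbr E v = {u. {v,u} \<in> E}"

lemma edge_facts:
  assumes "simple_graph V E" "{u,v} \<in> E"
  shows "u \<noteq> v" "u \<in> V" "v \<in> V"
proof -
  have h: "{u,v} \<subseteq> V" "card {u,v} = 2" using assms unfolding simple_graph_def by auto
  show "u \<noteq> v"
  proof
    assume "u = v"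
    then have "card {u,v} = 1" by simp
    then show False using h by simp
  qed
  show "u \<in> V" "v \<in> V" using h by auto
qed

lemma nbr_sub: "simple_graph V E \<Longrightarrow> nbr E v \<subseteq> V - {v}"
proof
  fix u assume a: "simple_graph V E" "u \<in> nbr E v"
  then have "{v,u} \<in> E" unfolding nbr_def by simp
  then have "v \<noteq> u" "u \<in> V" using edge_facts[OF a(1)] by blast+
  then show "u \<in> V - {v}" by simp
qed

lemma finite_nbr: "simple_graph V E \<Longrightarrow> finite (nbr E v)"
proof -
  assume a: "simple_graph V E"
  then have "finite V" unfolding simple_graph_def by simp
  then show ?thesis by (intro finite_subset[OF nbr_sub[OF a]]) simp
qed

lemma cycle_edge_cases:
  assumes "{v,u} \<in> cycle_edges cs" "cs ! i = v" "i < length cs" "distinct cs"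
  shows "u = cs ! ((i+1) mod length cs) \<or> u = cs ! ((i + length cs - 1) mod length cs)"
proof -
  let ?L = "length cs"
  obtain j where j: "j < ?L" "{v,u} = {cs ! j, cs ! ((j+1) mod ?L)}"
    using assms(1) unfolding cycle_edges_def by auto
  have jm: "(j+1) mod ?L < ?L" using j(1) by (metis gr_implies_not0 mod_less_divisor neq0_conv)
  from j(2) have "(v = cs ! j \<and> u = cs ! ((j+1) mod ?L)) \<or> (v = cs ! ((j+1) mod ?L) \<and> u = cs ! j)"
    by (auto simp: doubleton_eq_iff)
  then show ?thesis
  proof
    assume h: "v = cs ! j \<and> u = cs ! ((j+1) mod ?L)"
    then have "i = j" using assms j nth_eq_iff_index_eq by metis
    then show ?thesis using h by simp
  next
    assume h: "v = cs ! ((j+1) mod ?L) \<and> u = cs ! j"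
    then have ij: "i = (j+1) mod ?L" using assms jm nth_eq_iff_index_eq by metis
    have "j = (i + ?L - 1) mod ?L"
    proof (cases "j + 1 < ?L")
      case True
      then show ?thesis using ij by simp
    next
      case False
      then have "j + 1 = ?L" using j by simp
      then show ?thesis using ij by simp
    qed
    then show ?thesis using h by simp
  qed
qed

lemma cycle_many_nbrs_bad:
  assumes "is_cycle V E cs" "v \<in> set cs" "card {u \<in> set cs. {v,u} \<in> E} \<ge> 4"
  shows "has_cycle_two_adjacent_chords V E"
proof -
  let ?L = "length cs"
  obtain i where i: "i < ?L" "cs ! i = v" using assms(2) by (metis in_set_conv_nth)
  have dist: "distinct cs" using assms(1) is_cycle_def by blast
  let ?T = "{cs ! ((i+1) mod ?L), cs ! ((i + ?L - 1) mod ?L)}"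
  let ?S = "{u \<in> set cs. {v,u} \<in> E}"
  have "card ?T \<le> 2" by (simp add: card_insert_le_m1)
  moreover have "card ?S \<le> card (?S - ?T) + card ?T"
  proof -
    have "?S \<subseteq> (?S - ?T) \<union> ?T" by blast
    then have "card ?S \<le> card ((?S - ?T) \<union> ?T)" by (intro card_mono) auto
    also have "\<dots> \<le> card (?S - ?T) + card ?T" by (rule card_Un_le)
    finally show ?thesis .
  qed
  ultimately have "card (?S - ?T) \<ge> 2" using assms(3) by linarith
  then have "\<not> card (?S - ?T) \<le> Suc 0" by simp
  then have "\<not> (\<forall>a\<in>?S - ?T. \<forall>b\<in>?S - ?T. a = b)"
    using card_le_Suc0_iff_eq[of "?S - ?T"] by auto
  then obtain u1 u2 where u: "u1 \<in> ?S - ?T" "u2 \<in> ?S - ?T" "u1 \<noteq> u2"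
    by blast
  have nc: "{v,u} \<notin> cycle_edges cs" if "u \<notin> ?T" for u
    using cycle_edge_cases[OF _ i(2) i(1) dist] that by blast
  have ch: "is_chord E cs {v,u}" if "u \<in> ?S - ?T" for u
    using that nc assms(2) unfolding is_chord_def by auto
  have "{v,u1} \<noteq> {v,u2}" using u(3) by (auto simp: doubleton_eq_iff)
  then show ?thesis unfolding has_cycle_two_adjacent_chords_def
    using assms(1) ch u by blast
qed

lemma gpath_cycle:
  assumes "gpath V E p" "length p \<ge> 3" "{last p, hd p} \<in> E"
  shows "is_cycle V E p"
proof -
  have s: "\<And>i. Suc i < length p \<Longrightarrow> {p ! i, p ! Suc i} \<in> E"
    using assms(1) unfolding gpath_def successively_conv_nth by blast
  have "cycle_edges p \<subseteq> E"
  proof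
    fix e assume "e \<in> cycle_edges p"
    then obtain i where i: "i < length p" "e = {p ! i, p ! ((i+1) mod length p)}"
      unfolding cycle_edges_def by auto
    show "e \<in> E"
    proof (cases "Suc i < length p")
      case True
      then show ?thesis using i s by simp
    next
      case False
      then have "Suc i = length p" using i by simp
      then have a: "(i+1) mod length p = 0" by simp
      have b: "p ! i = last p" using \<open>Suc i = length p\<close> assms(2)
        by (metis diff_Suc_1 last_conv_nth list.size(3) not_numeral_le_zero)
      have "p \<noteq> []" using assms(2) by auto
      then have c: "p ! 0 = hd p" by (simp add: hd_conv_nth)
      have "e = {last p, hd p}" using i(2) a b c by simp
      then show ?thesis using assms(3) by simp
    qed
  qed
  then show ?thesis using assms unfolding is_cycle_def gpath_def by blast
qed


lemma gpath_rev: "gpath V E p \<Longrightarrow> gpath V E (rev p)"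
  unfolding gpath_def by (simp add: insert_commute)

lemma gpath_take: "gpath V E p \<Longrightarrow> 0 < m \<Longrightarrow> gpath V E (take m p)"
proof -
  assume a: "gpath V E p" "0 < m"
  have "successively (\<lambda>x y. {x,y} \<in> E) (take m p @ drop m p)"
    using a(1) unfolding gpath_def by simp
  then have "successively (\<lambda>x y. {x,y} \<in> E) (take m p)"
    unfolding successively_append_iff by blast
  moreover have "take m p \<noteq> []" using a unfolding gpath_def by simp
  moreover have "distinct (take m p)" "set (take m p) \<subseteq> V"
    using a(1) unfolding gpath_def by (auto dest: in_set_takeD)
  ultimately show ?thesis unfolding gpath_def by blast
qed

lemma gpath_drop: "gpath V E p \<Longrightarrow> m < length p \<Longrightarrow> gpath V E (drop m p)"
proof -
  assume a: "gpath V E p" "m < length p"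
  have "successively (\<lambda>x y. {x,y} \<in> E) (take m p @ drop m p)"
    using a(1) unfolding gpath_def by simp
  then have "successively (\<lambda>x y. {x,y} \<in> E) (drop m p)"
    unfolding successively_append_iff by blast
  moreover have "drop m p \<noteq> []" using a unfolding gpath_def by simp
  moreover have "distinct (drop m p)" "set (drop m p) \<subseteq> V"
    using a(1) unfolding gpath_def by (auto dest: in_set_dropD)
  ultimately show ?thesis unfolding gpath_def by blast
qed

lemma gpath_Cons:
  assumes "gpath V E p" "u \<notin> set p" "u \<in> V" "{u, hd p} \<in> E"
  shows "gpath V E (u # p)"
  using assms unfolding gpath_def by (simp add: successively_Cons)

lemma longest_path_exists:
  assumes "simple_graph V E" "v \<in> V"
  shows "\<exists>p. gpath V E p \<and> (\<forall>q. gpath V E q \<longrightarrow> length q \<le> length p)"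
proof -
  let ?P = "\<lambda>k. \<exists>p. gpath V E p \<and> length p = k"
  have "?P 1" using assms(2) unfolding gpath_def by (intro exI[of _ "[v]"]) simp
  moreover have "\<forall>y. ?P y \<longrightarrow> y \<le> card V"
  proof (intro allI impI)
    fix y assume "?P y"
    then obtain p where p: "gpath V E p" "length p = y" by blast
    then have "y = card (set p)" unfolding gpath_def by (simp add: distinct_card)
    also have "\<dots> \<le> card V" using p(1) assms(1) unfolding gpath_def simple_graph_def
      by (intro card_mono) auto
    finally show "y \<le> card V" .
  qed
  ultimately have "\<exists>k. ?P k \<and> (\<forall>y. ?P y \<longrightarrow> y \<le> k)"
    by (rule Nat.ex_has_greatest_nat)
  then obtain k where k0: "?P k \<and> (\<forall>y. ?P y \<longrightarrow> y \<le> k)" ..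
  have k: "?P k" "\<forall>y. ?P y \<longrightarrow> y \<le> k" using k0 by (rule conjunct1, rule conjunct2)
  from k(1) obtain p where p0: "gpath V E p \<and> length p = k" ..
  have p: "gpath V E p" "length p = k" using p0 by (rule conjunct1, rule conjunct2)
  have "\<forall>q. gpath V E q \<longrightarrow> length q \<le> length p"
  proof (intro allI impI)
    fix q assume "gpath V E q"
    then have "?P (length q)" by blast
    then show "length q \<le> length p" using k(2) p(2) by simp
  qed
  then show ?thesis using p(1) by blast
qed

definition longest :: "'a set \<Rightarrow> 'a set set \<Rightarrow> 'a list \<Rightarrow> bool" where
  "longest V E p \<longleftrightarrow> gpath V E p \<and> (\<forall>q. gpath V E q \<longrightarrow> length q \<le> length p)"

lemma longest_hd_nbr:
  assumes "simple_graph V E" "longest V E p"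
  shows "nbr E (hd p) \<subseteq> set p"
proof
  fix u assume u: "u \<in> nbr E (hd p)"
  show "u \<in> set p"
  proof (rule ccontr)
    assume nu: "u \<notin> set p"
    have e: "{hd p, u} \<in> E" using u unfolding nbr_def by simp
    then have "u \<in> V" using edge_facts[OF assms(1)] by blast
    moreover have "{u, hd p} \<in> E" using e by (simp add: insert_commute)
    moreover have gp: "gpath V E p" using assms(2) unfolding longest_def by (elim conjE)
    ultimately have gu: "gpath V E (u # p)" using gpath_Cons[OF gp nu] by simp
    have al: "\<forall>q. gpath V E q \<longrightarrow> length q \<le> length p" using assms(2) unfolding longest_def by (elim conjE)
    have "length (u # p) \<le> length p" using al[rule_format, OF gu] .
    then show False by simp
  qed
qed

lemma longest_rev: "longest V E p \<Longrightarrow> longest V E (rev p)"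
  unfolding longest_def using gpath_rev by (metis length_rev)

lemma longest_last_nbr:
  assumes "simple_graph V E" "longest V E p"
  shows "nbr E (last p) \<subseteq> set p"
proof -
  have "p \<noteq> []" using assms(2) unfolding longest_def gpath_def by blast
  then have "last p = hd (rev p)" by (simp add: hd_rev)
  then show ?thesis using longest_hd_nbr[OF assms(1) longest_rev[OF assms(2)]] by simp
qed

lemma mindeg4_bad:
  assumes g: "simple_graph V E" and "V \<noteq> {}" and deg: "\<forall>v\<in>V. card (nbr E v) \<ge> 4"
  shows "has_cycle_two_adjacent_chords V E"
proof -
  obtain v where "v \<in> V" using assms(2) by blast
  then obtain p where lp: "longest V E p" using longest_path_exists[OF g] unfolding longest_def by blast
  have gp: "gpath V E p" using lp unfolding longest_def by blast
  have pne: "p \<noteq> []" using gp unfolding gpath_def by blast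
  let ?v0 = "hd p"
  let ?N = "nbr E ?v0"
  have v0V: "?v0 \<in> V" using gp pne unfolding gpath_def by auto
  have Nsub: "?N \<subseteq> set p" using longest_hd_nbr[OF g lp] .
  have finN: "finite ?N" using finite_nbr[OF g] .
  have cN: "card ?N \<ge> 4" using deg v0V by blast
  let ?J = "{i. i < length p \<and> p ! i \<in> ?N}"
  have finJ: "finite ?J" by simp
  have "?N \<noteq> {}" using cN by auto
  then obtain u0 where "u0 \<in> ?N" by blast
  then obtain i0 where "i0 < length p" "p ! i0 = u0" using Nsub by (metis in_set_conv_nth subsetD)
  then have Jne: "?J \<noteq> {}" using \<open>u0 \<in> ?N\<close> by blast
  define j where "j = Max ?J"
  have jJ: "j \<in> ?J" unfolding j_def using Max_in[OF finJ Jne] .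
  have jmax: "i \<le> j" if "i \<in> ?J" for i unfolding j_def using Max_ge[OF finJ that] .
  define cs where "cs = take (Suc j) p"
  have jl: "j < length p" using jJ by simp
  have gcs: "gpath V E cs" unfolding cs_def using gpath_take[OF gp] by simp
  have hdcs: "hd cs = ?v0" unfolding cs_def using pne by simp
  have lastcs: "last cs = p ! j" unfolding cs_def using jl
    by (subst last_conv_nth) auto
  have Ncs: "?N \<subseteq> set cs"
  proof
    fix u assume u: "u \<in> ?N"
    then obtain i where i: "i < length p" "p ! i = u" using Nsub by (metis in_set_conv_nth subsetD)
    then have "i \<le> j" using jmax u by blast
    then have "take (Suc j) p ! i = u" using i by simp
    moreover have "i < length (take (Suc j) p)" using i \<open>i \<le> j\<close> by simp
    ultimately show "u \<in> set cs" unfolding cs_def by (metis nth_mem)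
  qed
  have v0cs: "?v0 \<in> set cs" using hdcs gcs unfolding gpath_def by (metis list.set_sel(1))
  have v0N: "?v0 \<notin> ?N" using nbr_sub[OF g] by blast
  have "card (insert ?v0 ?N) \<le> card (set cs)" using Ncs v0cs by (intro card_mono) auto
  moreover have "card (insert ?v0 ?N) = Suc (card ?N)" using finN v0N by simp
  moreover have "card (set cs) = length cs" using gcs unfolding gpath_def by (simp add: distinct_card)
  ultimately have len: "length cs \<ge> 3" using cN by linarith
  have "{?v0, p ! j} \<in> E" using jJ unfolding nbr_def by simp
  then have "{last cs, hd cs} \<in> E" using hdcs lastcs by (simp add: insert_commute)
  then have cyc: "is_cycle V E cs" using gpath_cycle[OF gcs len] by blast
  have "?N \<subseteq> {u \<in> set cs. {?v0,u} \<in> E}" using Ncs unfolding nbr_def by auto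
  then have "card ?N \<le> card {u \<in> set cs. {?v0,u} \<in> E}" by (intro card_mono) auto
  then show ?thesis using cycle_many_nbrs_bad[OF cyc v0cs] cN by linarith
qed

lemma gpath_append:
  assumes "gpath V E xs" "gpath V E ys" "set xs \<inter> set ys = {}" "{last xs, hd ys} \<in> E"
  shows "gpath V E (xs @ ys)"
  using assms unfolding gpath_def by (simp add: successively_append_iff)

lemma gpath_rotate:
  assumes "gpath V E cs" "{last cs, hd cs} \<in> E" "m < length cs"
  shows "gpath V E (drop m cs @ take m cs)"
proof (cases "m = 0")
  case True
  then show ?thesis using assms by simp
next
  case False
  have d: "gpath V E (drop m cs)" using gpath_drop[OF assms(1,3)] .
  have t: "gpath V E (take m cs)" using gpath_take[OF assms(1)] False by simp
  have dis: "distinct cs" using assms(1) unfolding gpath_def by blast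
  have "set (drop m cs) \<inter> set (take m cs) = {}"
    using set_take_disj_set_drop_if_distinct[OF dis, of m m] by auto
  moreover have "last (drop m cs) = last cs" using assms(3) by simp
  moreover have "hd (take m cs) = hd cs" using False by simp
  ultimately show ?thesis using gpath_append[OF d t] assms(2) by simp
qed

lemma dirac:
  assumes g: "simple_graph V E" and cV: "card V = n" and n3: "n \<ge> 3"
    and deg: "\<forall>v\<in>V. n \<le> 2 * card (nbr E v)"
  shows "\<exists>cs. is_cycle V E cs \<and> set cs = V"
proof -
  have finV: "finite V" using g unfolding simple_graph_def by blast
  have "V \<noteq> {}" using cV n3 by auto
  then obtain v where "v \<in> V" by blast
  then obtain p where lp: "longest V E p" using longest_path_exists[OF g] unfolding longest_def by blast
  have gp: "gpath V E p" using lp unfolding longest_def by blast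
  have pne: "p \<noteq> []" using gp unfolding gpath_def by blast
  have dp: "distinct p" using gp unfolding gpath_def by blast
  define L where "L = length p"
  define k where "k = L - 1"
  have Lk: "L = Suc k" using pne unfolding k_def L_def by (cases p) auto
  let ?v0 = "hd p" and ?vk = "last p"
  have v0: "?v0 = p ! 0" using pne by (simp add: hd_conv_nth)
  have vk: "?vk = p ! k" using pne unfolding k_def L_def by (simp add: last_conv_nth)
  let ?N0 = "nbr E ?v0" and ?Nk = "nbr E ?vk"
  have v0V: "?v0 \<in> V" using gp pne unfolding gpath_def by auto
  have vkV: "?vk \<in> V" using gp pne unfolding gpath_def by auto
  have N0p: "?N0 \<subseteq> set p" using longest_hd_nbr[OF g lp] .
  have Nkp: "?Nk \<subseteq> set p" using longest_last_nbr[OF g lp] .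
  have finN0: "finite ?N0" and finNk: "finite ?Nk" using finite_nbr[OF g] by auto
  have d0: "n \<le> 2 * card ?N0" using deg v0V by blast
  have dk: "n \<le> 2 * card ?Nk" using deg vkV by blast
  have v0N0: "?v0 \<notin> ?N0" and vkNk: "?vk \<notin> ?Nk" using nbr_sub[OF g] by blast+
  define A where "A = {i. i < k \<and> p ! (Suc i) \<in> ?N0}"
  define B where "B = {i. i < k \<and> p ! i \<in> ?Nk}"
  have imA: "?N0 = (\<lambda>i. p ! (Suc i)) ` A"
  proof
    show "?N0 \<subseteq> (\<lambda>i. p ! (Suc i)) ` A"
    proof
      fix u assume u: "u \<in> ?N0"
      then obtain m where m: "m < L" "p ! m = u" using N0p unfolding L_def by (metis in_set_conv_nth subsetD)
      have "m \<noteq> 0"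
      proof
        assume "m = 0"
        then have "u = ?v0" using m v0 by simp
        then show False using u v0N0 by simp
      qed
      then obtain i where "m = Suc i" by (cases m) auto
      then show "u \<in> (\<lambda>i. p ! (Suc i)) ` A" using m u Lk unfolding A_def by auto
    qed
  qed (auto simp: A_def)
  have injA: "inj_on (\<lambda>i. p ! (Suc i)) A"
    using dp Lk unfolding A_def L_def by (auto simp: inj_on_def nth_eq_iff_index_eq)
  have cA: "card A = card ?N0" using imA injA by (simp add: card_image)
  have imB: "?Nk = (\<lambda>i. p ! i) ` B"
  proof
    show "?Nk \<subseteq> (\<lambda>i. p ! i) ` B"
    proof
      fix u assume u: "u \<in> ?Nk"
      then obtain m where m: "m < L" "p ! m = u" using Nkp unfolding L_def by (metis in_set_conv_nth subsetD)
      have "m \<noteq> k" using m u vk vkNk by auto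
      then have "m < k" using m Lk by simp
      then show "u \<in> (\<lambda>i. p ! i) ` B" using m u unfolding B_def by auto
    qed
  qed (auto simp: B_def)
  have injB: "inj_on (\<lambda>i. p ! i) B"
    using dp Lk unfolding B_def L_def by (auto simp: inj_on_def nth_eq_iff_index_eq)
  have cB: "card B = card ?Nk" using imB injB by (simp add: card_image)
  have Lle: "L \<le> n"
  proof -
    have "L = card (set p)" using dp unfolding L_def by (simp add: distinct_card)
    also have "\<dots> \<le> n"
    proof -
      have "set p \<subseteq> V" using gp unfolding gpath_def by blast
      from card_mono[OF finV this] show ?thesis using cV by simp
    qed
    finally show ?thesis .
  qed
  have LN0: "Suc (card ?N0) \<le> L"
  proof -
    have "card (insert ?v0 ?N0) \<le> card (set p)" using N0p pne by (intro card_mono) auto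
    then show ?thesis using finN0 v0N0 dp unfolding L_def by (simp add: distinct_card)
  qed
  obtain i where iA: "i \<in> A" and iB: "i \<in> B"
  proof (rule ccontr)
    assume "\<not> thesis"
    then have "A \<inter> B = {}" using that by blast
    moreover have "A \<union> B \<subseteq> {0..<k}" unfolding A_def B_def by auto
    moreover have fA: "finite A" and fB: "finite B" unfolding A_def B_def by auto
    ultimately have "card (A \<union> B) = card A + card B" by (simp add: card_Un_disjoint)
    moreover have "card (A \<union> B) \<le> card {0..<k}"
      using \<open>A \<union> B \<subseteq> {0..<k}\<close> by (intro card_mono) auto
    ultimately have "card A + card B \<le> k" by simp
    then show False using cA cB d0 dk Lle Lk by linarith
  qed
  have ik: "i < k" using iA unfolding A_def by simp
  define cs where "cs = take (Suc i) p @ rev (drop (Suc i) p)"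
  have g1: "gpath V E (take (Suc i) p)" using gpath_take[OF gp] by simp
  have g2: "gpath V E (rev (drop (Suc i) p))" using gpath_rev[OF gpath_drop[OF gp]] ik Lk
    unfolding L_def by simp
  have dis: "set (take (Suc i) p) \<inter> set (rev (drop (Suc i) p)) = {}"
    using set_take_disj_set_drop_if_distinct[OF dp, of "Suc i" "Suc i"] by auto
  have l1: "last (take (Suc i) p) = p ! i" using ik Lk unfolding L_def
    by (subst last_conv_nth) auto
  have h2: "hd (rev (drop (Suc i) p)) = ?vk" using ik Lk unfolding L_def by (simp add: hd_rev)
  have e1: "{p ! i, ?vk} \<in> E" using iB unfolding B_def nbr_def by (simp add: insert_commute)
  have gcs: "gpath V E cs" unfolding cs_def using gpath_append[OF g1 g2 dis] l1 h2 e1 by simp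
  have scs: "set cs = set p"
  proof -
    have "set cs = set (take (Suc i) p) \<union> set (drop (Suc i) p)" unfolding cs_def by simp
    also have "\<dots> = set (take (Suc i) p @ drop (Suc i) p)" by (simp only: set_append)
    also have "\<dots> = set p" by (simp only: append_take_drop_id)
    finally show ?thesis .
  qed
  have lcs: "length cs = L" unfolding cs_def L_def using ik Lk unfolding L_def by simp
  have hcs: "hd cs = ?v0" unfolding cs_def using pne by simp
  have lstcs: "last cs = p ! Suc i" unfolding cs_def using ik Lk unfolding L_def
    by (simp add: last_rev hd_drop_conv_nth)
  have e2: "{last cs, hd cs} \<in> E" using iA hcs lstcs unfolding A_def nbr_def by (simp add: insert_commute)
  have L3: "L \<ge> 3" using LN0 d0 n3 by linarith
  have cyc: "is_cycle V E cs" using gpath_cycle[OF gcs _ e2] lcs L3 by simp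
  have "set p = V"
  proof (rule ccontr)
    assume "set p \<noteq> V"
    then obtain w where w: "w \<in> V" "w \<notin> set p" using gp unfolding gpath_def by blast
    have "\<exists>u \<in> set p. {w,u} \<in> E"
    proof (rule ccontr)
      assume "\<not> (\<exists>u \<in> set p. {w,u} \<in> E)"
      then have "nbr E w \<subseteq> (V - set p) - {w}" using nbr_sub[OF g, of w] unfolding nbr_def by auto
      then have "card (nbr E w) \<le> card ((V - set p) - {w})" using finV by (intro card_mono) auto
      also have "\<dots> = n - L - 1" using w cV finV gp dp unfolding gpath_def L_def
        by (simp add: card_Diff_subset distinct_card)
      finally have "card (nbr E w) \<le> n - L - 1" .
      moreover have "n \<le> 2 * card (nbr E w)" using deg w by blast
      ultimately show False using LN0 d0 Lle by linarith
    qed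
    then obtain u where u: "u \<in> set cs" "{w,u} \<in> E" using scs by blast
    then obtain m where m: "m < length cs" "cs ! m = u" by (metis in_set_conv_nth)
    have gr: "gpath V E (drop m cs @ take m cs)" using gpath_rotate[OF gcs e2 m(1)] .
    have "hd (drop m cs @ take m cs) = u" using m by (simp add: hd_append hd_drop_conv_nth)
    moreover have "w \<notin> set (drop m cs @ take m cs)"
    proof -
      have "set (drop m cs @ take m cs) = set (take m cs @ drop m cs)" by (simp only: set_append Un_commute)
      also have "\<dots> = set cs" by (simp only: append_take_drop_id)
      finally show ?thesis using w scs by simp
    qed
    ultimately have "gpath V E (w # (drop m cs @ take m cs))" using gpath_Cons[OF gr _ w(1)] u by simp
    then have "length (w # (drop m cs @ take m cs)) \<le> L" using lp unfolding longest_def L_def by blast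
    moreover have "length (w # (drop m cs @ take m cs)) = Suc L" using lcs m by simp
    ultimately show False by simp
  qed
  then show ?thesis using cyc scs by blast
qed

lemma finite_E: "simple_graph V E \<Longrightarrow> finite E"
proof -
  assume g: "simple_graph V E"
  then have "E \<subseteq> Pow V" "finite V" unfolding simple_graph_def by auto
  then show ?thesis by (meson finite_Pow_iff finite_subset)
qed

lemma edge_form:
  assumes "simple_graph V E" "e \<in> E"
  shows "\<exists>x y. e = {x,y} \<and> x \<noteq> y"
  using assms unfolding simple_graph_def by (simp add: card_2_iff)

lemma inc_nbr:
  assumes g: "simple_graph V E"
  shows "{e \<in> E. v \<in> e} = (\<lambda>u. {v,u}) ` nbr E v"
proof
  show "{e \<in> E. v \<in> e} \<subseteq> (\<lambda>u. {v,u}) ` nbr E v"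
  proof
    fix e assume e: "e \<in> {e \<in> E. v \<in> e}"
    then obtain x y where xy: "e = {x,y}" "x \<noteq> y" using edge_form[OF g] by blast
    show "e \<in> (\<lambda>u. {v,u}) ` nbr E v"
    proof (cases "v = x")
      case True
      then show ?thesis using e xy unfolding nbr_def by auto
    next
      case False
      then have "v = y" using e xy by auto
      then have "e = {v,x}" using xy by auto
      then show ?thesis using e unfolding nbr_def by auto
    qed
  qed
qed (auto simp: nbr_def)

lemma card_inc:
  assumes g: "simple_graph V E"
  shows "card {e \<in> E. v \<in> e} = card (nbr E v)"
proof -
  have "inj_on (\<lambda>u. {v,u}) (nbr E v)"
  proof (rule inj_onI)
    fix a b assume a: "a \<in> nbr E v" "b \<in> nbr E v" "{v,a} = {v,b}"
    have "a \<noteq> v" using a(1) nbr_sub[OF g] by blast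
    then show "a = b" using a(3) by (auto simp: doubleton_eq_iff)
  qed
  then show ?thesis using inc_nbr[OF g] by (simp add: card_image)
qed

lemma card_del:
  assumes g: "simple_graph V E"
  shows "card E = card {e \<in> E. v \<notin> e} + card (nbr E v)"
proof -
  have f: "finite E" using finite_E[OF g] .
  have "E = {e \<in> E. v \<notin> e} \<union> {e \<in> E. v \<in> e}" by blast
  then have "card E = card {e \<in> E. v \<notin> e} + card {e \<in> E. v \<in> e}"
    using f by (metis (no_types, lifting) card_Un_disjoint disjoint_iff finite_Un mem_Collect_eq)
  then show ?thesis using card_inc[OF g] by simp
qed

lemma simple_del:
  assumes g: "simple_graph V E"
  shows "simple_graph (V - {v}) {e \<in> E. v \<notin> e}"
  using g unfolding simple_graph_def by auto

lemma nbr_del: "u \<noteq> v \<Longrightarrow> nbr {e \<in> E. v \<notin> e} u = nbr E u - {v}"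
  unfolding nbr_def by auto

lemma nobad_mono:
  assumes "\<not> has_cycle_two_adjacent_chords V E" "V' \<subseteq> V" "E' \<subseteq> E"
  shows "\<not> has_cycle_two_adjacent_chords V' E'"
proof
  assume "has_cycle_two_adjacent_chords V' E'"
  then obtain cs e1 e2 v where h: "is_cycle V' E' cs" "is_chord E' cs e1" "is_chord E' cs e2"
     "e1 \<noteq> e2" "v \<in> e1" "v \<in> e2"
    unfolding has_cycle_two_adjacent_chords_def by blast
  have "is_cycle V E cs" using h(1) assms(2,3) unfolding is_cycle_def by blast
  moreover have "is_chord E cs e1" "is_chord E cs e2" using h(2,3) assms(3) unfolding is_chord_def by blast+
  ultimately have "has_cycle_two_adjacent_chords V E"
    unfolding has_cycle_two_adjacent_chords_def using h(4-6) by blast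
  then show False using assms(1) by blast
qed

lemma card_E_choose:
  assumes g: "simple_graph V E"
  shows "card E \<le> card V choose 2"
proof -
  have fV: "finite V" using g unfolding simple_graph_def by blast
  have "E \<subseteq> {B. B \<subseteq> V \<and> card B = 2}" using g unfolding simple_graph_def by blast
  then have "card E \<le> card {B. B \<subseteq> V \<and> card B = 2}" using fV by (intro card_mono) auto
  then show ?thesis using n_subsets[OF fV] by simp
qed

lemma handshake:
  assumes g: "simple_graph V E"
  shows "(\<Sum>v\<in>V. card (nbr E v)) = 2 * card E"
proof -
  have fV: "finite V" using g unfolding simple_graph_def by blast
  have fE: "finite E" using finite_E[OF g] .
  have "\<forall>e\<in>E. card {v \<in> V. v \<in> e} = 2"
  proof
    fix e assume "e \<in> E"
    then have "e \<subseteq> V" "card e = 2" using g unfolding simple_graph_def by auto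
    moreover have "{v \<in> V. v \<in> e} = e" using \<open>e \<subseteq> V\<close> by blast
    ultimately show "card {v \<in> V. v \<in> e} = 2" by simp
  qed
  then have "(\<Sum>v\<in>V. card {e \<in> E. v \<in> e}) = 2 * card E"
    using sum_multicount[OF fV fE, of "\<lambda>v e. v \<in> e" 2] by simp
  then show ?thesis using card_inc[OF g] by simp
qed

lemma ham_bad:
  assumes g: "simple_graph V E" and "is_cycle V E cs" "set cs = V" "v \<in> V" "card (nbr E v) \<ge> 4"
  shows "has_cycle_two_adjacent_chords V E"
proof -
  have "nbr E v \<subseteq> {u \<in> set cs. {v,u} \<in> E}"
  proof
    fix u assume "u \<in> nbr E v"
    then have e: "{v,u} \<in> E" unfolding nbr_def by simp
    then have "u \<in> V" by (rule edge_facts(3)[OF g])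
    then show "u \<in> {u \<in> set cs. {v,u} \<in> E}" using assms(3) e by simp
  qed
  then have "card (nbr E v) \<le> card {u \<in> set cs. {v,u} \<in> E}" by (intro card_mono) auto
  then show ?thesis using cycle_many_nbrs_bad[OF assms(2)] assms(3-5) by simp
qed

lemma big_deg:
  assumes g: "simple_graph V E" and "3 * card V < 2 * card E"
  shows "\<exists>v\<in>V. card (nbr E v) \<ge> 4"
proof (rule ccontr)
  assume "\<not> ?thesis"
  then have "\<forall>v\<in>V. card (nbr E v) \<le> 3" by auto
  then have "(\<Sum>v\<in>V. card (nbr E v)) \<le> card V * 3"
    using sum_bounded_above[of V "\<lambda>v. card (nbr E v)" 3] by simp
  then show False using handshake[OF g] assms(2) by linarith
qed

lemma five_bound:
  assumes g: "simple_graph V E" and cV: "card V = 5" and nb: "\<not> has_cycle_two_adjacent_chords V E"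
  shows "card E \<le> 7"
proof (rule ccontr)
  assume "\<not> card E \<le> 7"
  then have e8: "card E \<ge> 8" by simp
  have fV: "finite V" using g unfolding simple_graph_def by blast
  show False
  proof (cases "\<exists>v\<in>V. card (nbr E v) \<le> 2")
    case True
    then obtain v where v: "v \<in> V" "card (nbr E v) \<le> 2" by blast
    let ?V' = "V - {v}" and ?E' = "{e \<in> E. v \<notin> e}"
    have g': "simple_graph ?V' ?E'" using simple_del[OF g] .
    have cV': "card ?V' = 4" using cV v fV by simp
    have "card ?E' \<le> 6" using card_E_choose[OF g'] cV' by (simp add: choose_two)
    moreover have ce: "card E = card ?E' + card (nbr E v)" using card_del[OF g] .
    ultimately have d2: "card (nbr E v) = 2" and e6: "card ?E' = 6" using e8 v(2) by linarith+
    have fV': "finite ?V'" using fV by simp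
    have sub: "?E' \<subseteq> {B. B \<subseteq> ?V' \<and> card B = 2}" using g' unfolding simple_graph_def by blast
    have cB: "card {B. B \<subseteq> ?V' \<and> card B = 2} = 6" using n_subsets[OF fV'] cV' by (simp add: choose_two)
    have finB: "finite {B. B \<subseteq> ?V' \<and> card B = 2}"
      by (rule finite_subset[of _ "Pow ?V'"]) (auto simp: fV)
    have Eall: "?E' = {B. B \<subseteq> ?V' \<and> card B = 2}"
      using card_subset_eq[OF finB sub] e6 cB by simp
    have edge: "{x,y} \<in> E" if "x \<in> ?V'" "y \<in> ?V'" "x \<noteq> y" for x y
    proof -
      have s1: "{x,y} \<subseteq> ?V'" using that(1,2) by blast
      have s2: "card {x,y} = 2" using that(3) by simp
      have "{x,y} \<in> {B. B \<subseteq> ?V' \<and> card B = 2}" using s1 s2 by (intro CollectI conjI)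
      then have "{x,y} \<in> ?E'" by (rule subst[OF Eall[symmetric], of "\<lambda>S. {x,y} \<in> S"])
      then show ?thesis by simp
    qed
    obtain a b where ab: "nbr E v = {a,b}" "a \<noteq> b" using d2 unfolding card_2_iff by blast
    have abV: "a \<in> ?V'" "b \<in> ?V'" using ab nbr_sub[OF g, of v] by auto
    have "card (?V' - {a,b}) = 2" using cV' abV ab(2) fV by (simp add: card_Diff_subset)
    then obtain c d where cd: "?V' - {a,b} = {c,d}" "c \<noteq> d" unfolding card_2_iff by blast
    have cdV: "c \<in> ?V'" "d \<in> ?V'" "c \<notin> {a,b}" "d \<notin> {a,b}" using cd by blast+
    have eva: "{v,a} \<in> E" and evb: "{v,b} \<in> E" using ab unfolding nbr_def by auto
    let ?cs = "[v,a,c,d,b]"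
    have dist: "distinct ?cs" using abV cdV ab(2) cd(2) by auto
    have sv: "set ?cs \<subseteq> V" using v abV cdV by auto
    have eac: "{a,c} \<in> E" using abV(1) cdV(1,3) by (intro edge) auto
    have ecd: "{c,d} \<in> E" using cdV(1,2) cd(2) by (intro edge) auto
    have edb: "{d,b} \<in> E" using abV(2) cdV(2,4) by (intro edge) auto
    have succ: "successively (\<lambda>x y. {x,y} \<in> E) ?cs" using eva eac ecd edb by simp
    have gp: "gpath V E ?cs" unfolding gpath_def using dist sv succ by blast
    have cl: "{last ?cs, hd ?cs} \<in> E" using evb by (simp add: insert_commute)
    have cyc: "is_cycle V E ?cs" using gpath_cycle[OF gp _ cl] by simp
    have eav: "{a,v} \<in> E" using eva by (simp add: insert_commute)
    have ead: "{a,d} \<in> E" using abV(1) cdV(2,4) by (intro edge) auto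
    have eab: "{a,b} \<in> E" using abV ab(2) by (intro edge) auto
    have sub: "{v,c,d,b} \<subseteq> {u \<in> set ?cs. {a,u} \<in> E}"
      using eav eac ead eab by simp
    have vc: "v \<noteq> c" "v \<noteq> d" "v \<noteq> b" using abV cdV by auto
    have cb: "c \<noteq> b" "d \<noteq> b" using cdV by auto
    have "card {v,c,d,b} = 4" using vc cb cd(2) by simp
    moreover have "card {v,c,d,b} \<le> card {u \<in> set ?cs. {a,u} \<in> E}"
      by (rule card_mono[OF _ sub]) simp
    ultimately have "card {u \<in> set ?cs. {a,u} \<in> E} \<ge> 4" by linarith
    moreover have "a \<in> set ?cs" by simp
    ultimately show False using cycle_many_nbrs_bad[OF cyc] nb by blast
  next
    case False
    have dg: "\<forall>v\<in>V. 5 \<le> 2 * card (nbr E v)"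
    proof
      fix v assume "v \<in> V"
      then have "\<not> card (nbr E v) \<le> 2" using False by blast
      then show "5 \<le> 2 * card (nbr E v)" by linarith
    qed
    have "\<exists>cs. is_cycle V E cs \<and> set cs = V" by (rule dirac[OF g cV _ dg]) simp
    then obtain cs where cs: "is_cycle V E cs" "set cs = V" by blast
    have "3 * card V < 2 * card E" using cV e8 by simp
    then obtain v where "v \<in> V" "card (nbr E v) \<ge> 4" using big_deg[OF g] by blast
    then show False using ham_bad[OF g cs] nb by blast
  qed
qed

lemma six_bound:
  assumes g: "simple_graph V E" and cV: "card V = 6" and nb: "\<not> has_cycle_two_adjacent_chords V E"
  shows "card E \<le> 9"
proof (rule ccontr)
  assume "\<not> card E \<le> 9"
  then have e10: "card E \<ge> 10" by simp
  have fV: "finite V" using g unfolding simple_graph_def by blast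
  show False
  proof (cases "\<exists>v\<in>V. card (nbr E v) \<le> 2")
    case True
    then obtain v where v: "v \<in> V" "card (nbr E v) \<le> 2" by blast
    have "card {e \<in> E. v \<notin> e} \<le> 7"
      using five_bound[OF simple_del[OF g, of v]] cV v fV nobad_mono[OF nb, of "V - {v}" "{e \<in> E. v \<notin> e}"]
      by simp
    then show False using card_del[OF g, of v] v e10 by linarith
  next
    case False
    have dg: "\<forall>v\<in>V. 6 \<le> 2 * card (nbr E v)"
    proof
      fix v assume "v \<in> V"
      then have "\<not> card (nbr E v) \<le> 2" using False by blast
      then show "6 \<le> 2 * card (nbr E v)" by linarith
    qed
    have "\<exists>cs. is_cycle V E cs \<and> set cs = V" by (rule dirac[OF g cV _ dg]) simp
    then obtain cs where cs: "is_cycle V E cs" "set cs = V" by blast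
    have "3 * card V < 2 * card E" using cV e10 by simp
    then obtain v where "v \<in> V" "card (nbr E v) \<ge> 4" using big_deg[OF g] by blast
    then show False using ham_bad[OF g cs] nb by blast
  qed
qed

lemma main_bound:
  assumes "n \<ge> 6" "simple_graph V E" "card V = n" "\<not> has_cycle_two_adjacent_chords V E"
  shows "card E \<le> 3 * n - 9"
  using assms
proof (induction n arbitrary: V E rule: nat_induct_at_least)
  case base
  then show ?case using six_bound by fastforce
next
  case (Suc n)
  have g: "simple_graph V E" using Suc by blast
  have fV: "finite V" using g unfolding simple_graph_def by blast
  have "V \<noteq> {}" using Suc.prems by auto
  then have "\<not> (\<forall>v\<in>V. card (nbr E v) \<ge> 4)" using mindeg4_bad[OF g] Suc.prems by blast
  then obtain v where v: "v \<in> V" "card (nbr E v) \<le> 3" by auto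
  have cV': "card (V - {v}) = n" using Suc.prems(2) v fV by simp
  have nb': "\<not> has_cycle_two_adjacent_chords (V - {v}) {e \<in> E. v \<notin> e}"
    by (rule nobad_mono[OF Suc.prems(3)]) auto
  have IH: "card {e \<in> E. v \<notin> e} \<le> 3 * n - 9"
    by (rule Suc.IH[OF simple_del[OF g] cV' nb'])
  define m where "m = 3 * n - 9"
  have eq: "3 * Suc n - 9 = m + 3" unfolding m_def using Suc.hyps by presburger
  have "card E \<le> m + 3" using card_del[OF g, of v] v(2) IH unfolding m_def[symmetric] by linarith
  then show ?case by (simp only: eq)
qed

definition cbip :: "'a set \<Rightarrow> 'a set set \<Rightarrow> 'a set \<Rightarrow> bool" where
  "cbip V E X \<longleftrightarrow> X \<subseteq> V \<and> card X = 3 \<and> E = {{x,y} | x y. x \<in> X \<and> y \<in> V - X}"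

lemma bip_edge:
  assumes "bipartite V E"
  obtains A B where "A \<union> B = V" "A \<inter> B = {}"
    "\<And>p q. {p,q} \<in> E \<Longrightarrow> (p \<in> A \<and> q \<in> B) \<or> (p \<in> B \<and> q \<in> A)"
proof -
  obtain A B where AB: "A \<union> B = V" "A \<inter> B = {}" "\<forall>e\<in>E. \<exists>a\<in>A. \<exists>b\<in>B. e = {a, b}"
    using assms unfolding bipartite_def by blast
  have H: "(p \<in> A \<and> q \<in> B) \<or> (p \<in> B \<and> q \<in> A)" if "{p,q} \<in> E" for p q
  proof -
    from AB(3) that have ex: "\<exists>a\<in>A. \<exists>b\<in>B. {p,q} = {a,b}" by (rule bspec)
    then obtain a where a: "a \<in> A" "\<exists>b\<in>B. {p,q} = {a,b}" by (rule bexE)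
    from a(2) obtain b where b: "b \<in> B" "{p,q} = {a,b}" by (rule bexE)
    note ab = a(1) b
    from ab(3) have "(p = a \<and> q = b) \<or> (p = b \<and> q = a)" by (simp add: doubleton_eq_iff)
    then show ?thesis using ab(1,2) by blast
  qed
  show ?thesis by (rule that[OF AB(1) AB(2) H])
qed

lemma bip_triangle:
  assumes "bipartite V E" "{a,b} \<in> E" "{b,c} \<in> E" "{a,c} \<in> E"
  shows False
proof -
  obtain A B where AB: "A \<inter> B = {}"
    "\<And>p q. {p,q} \<in> E \<Longrightarrow> (p \<in> A \<and> q \<in> B) \<or> (p \<in> B \<and> q \<in> A)"
    using bip_edge[OF assms(1)] by metis
  have 1: "(a \<in> A \<and> b \<in> B) \<or> (a \<in> B \<and> b \<in> A)" using AB(2)[OF assms(2)] .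
  have 2: "(b \<in> A \<and> c \<in> B) \<or> (b \<in> B \<and> c \<in> A)" using AB(2)[OF assms(3)] .
  have 3: "(a \<in> A \<and> c \<in> B) \<or> (a \<in> B \<and> c \<in> A)" using AB(2)[OF assms(4)] .
  show False using 1 2 3 AB(1) by blast
qed

lemma bip_del:
  assumes "bipartite V E"
  shows "bipartite (V - {v}) {e \<in> E. v \<notin> e}"
proof -
  obtain A B where AB: "A \<union> B = V" "A \<inter> B = {}" "\<forall>e\<in>E. \<exists>a\<in>A. \<exists>b\<in>B. e = {a, b}"
    using assms unfolding bipartite_def by blast
  have "\<forall>e\<in>{e \<in> E. v \<notin> e}. \<exists>a\<in>A - {v}. \<exists>b\<in>B - {v}. e = {a, b}"
  proof
    fix e assume e: "e \<in> {e \<in> E. v \<notin> e}"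
    then obtain a b where "a \<in> A" "b \<in> B" "e = {a,b}" using AB(3) by blast
    then show "\<exists>a\<in>A - {v}. \<exists>b\<in>B - {v}. e = {a, b}" using e by blast
  qed
  moreover have "(A - {v}) \<union> (B - {v}) = V - {v}" "(A - {v}) \<inter> (B - {v}) = {}" using AB(1,2) by blast+
  ultimately show ?thesis unfolding bipartite_def by blast
qed

lemma bip_base:
  assumes g: "simple_graph V E" and cV: "card V = 6" and bp: "bipartite V E" and cE: "card E = 9"
  shows "\<exists>X. cbip V E X"
proof -
  obtain A B where AB: "A \<union> B = V" "A \<inter> B = {}" "\<forall>e\<in>E. \<exists>a\<in>A. \<exists>b\<in>B. e = {a, b}"
    using bp unfolding bipartite_def by blast
  have fV: "finite V" using g unfolding simple_graph_def by blast
  have fA: "finite A" and fB: "finite B" using AB(1) fV by (metis finite_Un)+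
  let ?f = "\<lambda>(a,b). {a,b}"
  have sub: "E \<subseteq> ?f ` (A \<times> B)"
  proof
    fix e assume "e \<in> E"
    then obtain a b where "a \<in> A" "b \<in> B" "e = {a,b}" using AB(3) by blast
    then show "e \<in> ?f ` (A \<times> B)" by force
  qed
  have fI: "finite (?f ` (A \<times> B))" using fA fB by simp
  have "card (?f ` (A \<times> B)) \<le> card (A \<times> B)" by (rule card_image_le) (simp add: fA fB)
  also have "\<dots> = card A * card B" by (rule card_cartesian_product)
  finally have cI: "card (?f ` (A \<times> B)) \<le> card A * card B" .
  have "card E \<le> card (?f ` (A \<times> B))" by (rule card_mono[OF fI sub])
  then have ab9: "9 \<le> card A * card B" using cE cI by linarith
  have sum6: "card A + card B = 6" using card_Un_disjoint[OF fA fB AB(2)] AB(1) cV by simp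
  have cA: "card A = 3"
  proof -
    have "card A \<le> 6" using sum6 by linarith
    then have "card A \<in> {0,1,2,3,4,5,6}" by auto
    moreover have "card B = 6 - card A" using sum6 by linarith
    ultimately show ?thesis using ab9 by auto
  qed
  have cB: "card B = 3" using sum6 cA by linarith
  have eqI: "E = ?f ` (A \<times> B)"
  proof (rule card_subset_eq[OF fI sub])
    have "card A * card B = 9" using cA cB by simp
    then show "card E = card (?f ` (A \<times> B))" using cI cE \<open>card E \<le> card (?f ` (A \<times> B))\<close> by linarith
  qed
  have VA: "V - A = B" using AB(1,2) by blast
  have "E = {{x,y} | x y. x \<in> A \<and> y \<in> V - A}" unfolding eqI VA by auto
  moreover have "A \<subseteq> V" using AB(1) by blast
  ultimately show ?thesis unfolding cbip_def using cA by blast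
qed

lemma cbip_edge:
  assumes "cbip V E X" "x \<in> X" "y \<in> V - X"
  shows "{x,y} \<in> E" "{y,x} \<in> E"
proof -
  have E: "E = {{x,y} | x y. x \<in> X \<and> y \<in> V - X}" using assms(1) unfolding cbip_def by blast
  show "{x,y} \<in> E" unfolding E using assms(2,3) by blast
  then show "{y,x} \<in> E" by (simp add: insert_commute)
qed

lemma memI2: "e = {x,y} \<Longrightarrow> x \<in> X \<Longrightarrow> y \<in> W \<Longrightarrow> e \<in> {{x,y} | x y. x \<in> X \<and> y \<in> W}"
  by blast

lemma memE2: "e \<in> {{x,y} | x y. x \<in> X \<and> y \<in> W} \<Longrightarrow> (\<And>x y. e = {x,y} \<Longrightarrow> x \<in> X \<Longrightarrow> y \<in> W \<Longrightarrow> Q) \<Longrightarrow> Q"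
  by blast

lemma bip_all:
  assumes "n \<ge> 6" "simple_graph V E" "card V = n" "\<not> has_cycle_two_adjacent_chords V E"
    "bipartite V E" "card E = 3 * n - 9"
  shows "\<exists>X. cbip V E X"
  using assms
proof (induction n arbitrary: V E rule: nat_induct_at_least)
  case base
  then show ?case using bip_base by simp
next
  case (Suc n)
  have g: "simple_graph V E" using Suc.prems(1) .
  have fV: "finite V" using g unfolding simple_graph_def by blast
  have nb: "\<not> has_cycle_two_adjacent_chords V E" using Suc.prems(3) .
  have bp: "bipartite V E" using Suc.prems(4) .
  have "V \<noteq> {}" using Suc.prems(2) by auto
  then have "\<not> (\<forall>v\<in>V. card (nbr E v) \<ge> 4)" using mindeg4_bad[OF g] nb by blast
  then obtain v where v: "v \<in> V" "card (nbr E v) \<le> 3" by auto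
  let ?V' = "V - {v}" and ?E' = "{e \<in> E. v \<notin> e}"
  have g': "simple_graph ?V' ?E'" using simple_del[OF g] .
  have cV': "card ?V' = n" using Suc.prems(2) v fV by simp
  have nb': "\<not> has_cycle_two_adjacent_chords ?V' ?E'"
    by (rule nobad_mono[OF nb]) auto
  have bp': "bipartite ?V' ?E'" using bip_del[OF bp] .
  have bnd: "card ?E' \<le> 3 * n - 9" using main_bound[OF Suc.hyps g' cV' nb'] .
  have cd: "card E = card ?E' + card (nbr E v)" using card_del[OF g] .
  define m where "m = 3 * n - 9"
  have eq: "3 * Suc n - 9 = m + 3" unfolding m_def using Suc.hyps by presburger
  have cE: "card E = m + 3" using Suc.prems(5) eq by simp
  have d3: "card (nbr E v) = 3" and cE': "card ?E' = 3 * n - 9"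
    using cd cE bnd v(2) unfolding m_def[symmetric] by linarith+
  obtain X where X: "cbip ?V' ?E' X" using Suc.IH[OF g' cV' nb' bp' cE'] by blast
  define Y where "Y = ?V' - X"
  have XV: "X \<subseteq> ?V'" and cX: "card X = 3" and EX: "?E' = {{x,y} | x y. x \<in> X \<and> y \<in> Y}"
    using X unfolding cbip_def Y_def by blast+
  have fX: "finite X" using cX by (metis card.infinite zero_neq_numeral)
  have fY: "finite Y" unfolding Y_def using fV by simp
  have cY: "card Y = n - 3" unfolding Y_def using card_Diff_subset[OF fX XV] cV' cX by simp
  have XY: "X \<inter> Y = {}" unfolding Y_def by blast
  have vX: "v \<notin> X" using XV by blast
  have vY: "v \<notin> Y" unfolding Y_def by blast
  have XYV: "X \<union> Y = ?V'" unfolding Y_def using XV by blast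
  have exy: "{x,y} \<in> E" "{y,x} \<in> E" if "x \<in> X" "y \<in> Y" for x y
  proof -
    have "{x,y} \<in> ?E'" unfolding EX using that by blast
    then show "{x,y} \<in> E" by simp
    then show "{y,x} \<in> E" by (simp add: insert_commute)
  qed
  have E'mem: "e \<in> {{x,y} | x y. x \<in> X \<and> y \<in> Y}" if "e \<in> E" "v \<notin> e" for e
  proof -
    have "e \<in> ?E'" using that by simp
    then show ?thesis unfolding EX .
  qed
  let ?N = "nbr E v"
  have NV: "?N \<subseteq> ?V'" using nbr_sub[OF g] .
  have fN: "finite ?N" using finite_nbr[OF g] .
  have evu: "{v,u} \<in> E" if "u \<in> ?N" for u using that unfolding nbr_def by simp
  have incE: "{e \<in> E. v \<in> e} = (\<lambda>u. {v,u}) ` ?N" using inc_nbr[OF g] .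
  have vmem: "e \<in> (\<lambda>u. {v,u}) ` ?N" if "e \<in> E" "v \<in> e" for e
  proof -
    have "e \<in> {e \<in> E. v \<in> e}" using that by simp
    then show ?thesis unfolding incE .
  qed
  have nomix: False if "a \<in> ?N" "a \<in> X" "b \<in> ?N" "b \<in> Y" for a b
  proof -
    have "{v,a} \<in> E" "{v,b} \<in> E" using evu that by auto
    moreover have "{a,b} \<in> E" using exy that by blast
    ultimately show False using bip_triangle[OF bp, of v a b] by blast
  qed
  show ?case
  proof (cases "?N \<inter> Y = {}")
    case True
    have NsX: "?N \<subseteq> X"
    proof
      fix a assume "a \<in> ?N"
      then have "a \<in> ?V'" "a \<notin> Y" using NV True by auto
      then show "a \<in> X" unfolding Y_def by simp
    qed
    have "card ?N = card X" using d3 cX by simp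
    then have NX: "?N = X" using card_subset_eq[OF fX NsX] by simp
    have VX: "V - X = Y \<union> {v}" unfolding Y_def using vX v(1) by auto
    have "E = {{x,y} | x y. x \<in> X \<and> y \<in> V - X}"
    proof
      show "E \<subseteq> {{x,y} | x y. x \<in> X \<and> y \<in> V - X}"
      proof
        fix e assume e: "e \<in> E"
        show "e \<in> {{x,y} | x y. x \<in> X \<and> y \<in> V - X}"
        proof (cases "v \<in> e")
          case True
          obtain u where u: "u \<in> ?N" "e = {v,u}" using vmem[OF e True] by (rule imageE) simp
          have "e = {u,v}" using u(2) by (simp add: insert_commute)
          moreover have "u \<in> X" using NX u(1) by simp
          moreover have "v \<in> V - X" using VX by simp
          ultimately show ?thesis by (rule memI2)
        next
          case False
          obtain x y where xy: "e = {x,y}" "x \<in> X" "y \<in> Y" using E'mem[OF e False] by (rule memE2)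
          have "y \<in> V - X" using VX xy(3) by simp
          then show ?thesis by (rule memI2[OF xy(1) xy(2)])
        qed
      qed
    next
      show "{{x,y} | x y. x \<in> X \<and> y \<in> V - X} \<subseteq> E"
      proof
        fix e assume "e \<in> {{x,y} | x y. x \<in> X \<and> y \<in> V - X}"
        then obtain x y where xy: "e = {x,y}" "x \<in> X" "y \<in> V - X" by (rule memE2)
        show "e \<in> E"
        proof (cases "y = v")
          case True
          have "x \<in> ?N" using NX xy(2) by simp
          then have "{v,x} \<in> E" by (rule evu)
          then show ?thesis using xy(1) True by (simp add: insert_commute)
        next
          case False
          then have "y \<in> Y" using xy(3) VX by blast
          then show ?thesis using exy(1)[OF xy(2)] xy(1) by simp
        qed
      qed
    qed
    moreover have "X \<subseteq> V" using XV by blast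
    ultimately have "cbip V E X" unfolding cbip_def using cX by (intro conjI)
    then show ?thesis by (rule exI)
  next
    case False
    then obtain b where b: "b \<in> ?N" "b \<in> Y" by blast
    have NY: "?N \<subseteq> Y"
    proof
      fix a assume a: "a \<in> ?N"
      have "a \<notin> X" using nomix[OF a _ b] by blast
      moreover have "a \<in> ?V'" using a NV by blast
      ultimately show "a \<in> Y" unfolding Y_def by simp
    qed
    show ?thesis
    proof (cases "card Y = 3")
      case True
      then have NY': "?N = Y" using card_subset_eq[OF fY NY] d3 by simp
      have VY: "V - Y = X \<union> {v}" unfolding Y_def using XV v(1) by auto
      have "E = {{x,y} | x y. x \<in> Y \<and> y \<in> V - Y}"
      proof
        show "E \<subseteq> {{x,y} | x y. x \<in> Y \<and> y \<in> V - Y}"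
        proof
          fix e assume e: "e \<in> E"
          show "e \<in> {{x,y} | x y. x \<in> Y \<and> y \<in> V - Y}"
          proof (cases "v \<in> e")
            case True
            obtain u where u: "u \<in> ?N" "e = {v,u}" using vmem[OF e True] by (rule imageE) simp
            have "e = {u,v}" using u(2) by (simp add: insert_commute)
            moreover have "u \<in> Y" using NY' u(1) by simp
            moreover have "v \<in> V - Y" using VY by simp
            ultimately show ?thesis by (rule memI2)
          next
            case False
            obtain x y where xy: "e = {x,y}" "x \<in> X" "y \<in> Y" using E'mem[OF e False] by (rule memE2)
            have e2: "e = {y,x}" using xy(1) by (simp add: insert_commute)
            have "x \<in> V - Y" using VY xy(2) by simp
            then show ?thesis by (rule memI2[OF e2 xy(3)])
          qed
        qed
      next
        show "{{x,y} | x y. x \<in> Y \<and> y \<in> V - Y} \<subseteq> E"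
        proof
          fix e assume "e \<in> {{x,y} | x y. x \<in> Y \<and> y \<in> V - Y}"
          then obtain x y where xy: "e = {x,y}" "x \<in> Y" "y \<in> V - Y" by (rule memE2)
          show "e \<in> E"
          proof (cases "y = v")
            case True
            have "x \<in> ?N" using NY' xy(2) by simp
            then have "{v,x} \<in> E" by (rule evu)
            then show ?thesis using xy(1) True by (simp add: insert_commute)
          next
            case False
            then have "y \<in> X" using xy(3) VY by blast
            then show ?thesis using exy(2)[OF _ xy(2)] xy(1) by simp
          qed
        qed
      qed
      moreover have "Y \<subseteq> V" unfolding Y_def by blast
      ultimately have "cbip V E Y" unfolding cbip_def using True by (intro conjI)
      then show ?thesis by (rule exI)
    next
      case False
      then have cY4: "card Y > 3" using cY Suc.hyps by linarith
      obtain y1 y2 y3 where ys: "?N = {y1,y2,y3}" "y1 \<noteq> y2" "y2 \<noteq> y3" "y1 \<noteq> y3"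
        using d3 unfolding card_3_iff by blast
      have "\<not> Y \<subseteq> ?N"
      proof
        assume "Y \<subseteq> ?N"
        then have "card Y \<le> card ?N" by (rule card_mono[OF fN])
        then show False using cY4 d3 by linarith
      qed
      then obtain y4 where y4: "y4 \<in> Y" "y4 \<notin> ?N" unfolding subset_iff by blast
      obtain x1 x2 x3 where xs: "X = {x1,x2,x3}" "x1 \<noteq> x2" "x2 \<noteq> x3" "x1 \<noteq> x3"
        using cX unfolding card_3_iff by blast
      have yY: "y1 \<in> Y" "y2 \<in> Y" "y3 \<in> Y" using NY ys(1) by auto
      have yN: "y1 \<in> ?N" "y2 \<in> ?N" "y3 \<in> ?N" using ys(1) by auto
      have xX: "x1 \<in> X" "x2 \<in> X" "x3 \<in> X" using xs(1) by auto
      have y4n: "y4 \<noteq> y1" "y4 \<noteq> y2" "y4 \<noteq> y3" using y4(2) yN by auto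
      have xny: "x \<noteq> y" if "x \<in> X" "y \<in> Y" for x y using that XY by blast
      have vnx: "v \<noteq> x" if "x \<in> X" for x using that vX by blast
      have vny: "v \<noteq> y" if "y \<in> Y" for y using that vY by blast
      let ?cs = "[v,y1,x1,y2,x2,y4,x3,y3]"
      have dist: "distinct ?cs"
        using ys(2-4) xs(2-4) y4n xny[OF xX(1) yY(1)] xny[OF xX(1) yY(2)] xny[OF xX(1) yY(3)]
          xny[OF xX(2) yY(1)] xny[OF xX(2) yY(2)] xny[OF xX(2) yY(3)]
          xny[OF xX(3) yY(1)] xny[OF xX(3) yY(2)] xny[OF xX(3) yY(3)]
          xny[OF xX(1) y4(1)] xny[OF xX(2) y4(1)] xny[OF xX(3) y4(1)]
          vnx[OF xX(1)] vnx[OF xX(2)] vnx[OF xX(3)] vny[OF yY(1)] vny[OF yY(2)] vny[OF yY(3)]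
          vny[OF y4(1)]
        by simp
      have XV2: "X \<subseteq> V" using XV by blast
      have YV2: "Y \<subseteq> V" unfolding Y_def by blast
      have sV: "set ?cs \<subseteq> V" using v(1) yY xX y4(1) XV2 YV2 by (simp add: subset_iff)
      have succ: "successively (\<lambda>x y. {x,y} \<in> E) ?cs"
        using evu[OF yN(1)] exy(2)[OF xX(1) yY(1)] exy(1)[OF xX(1) yY(2)] exy(2)[OF xX(2) yY(2)]
          exy(1)[OF xX(2) y4(1)] exy(2)[OF xX(3) y4(1)] exy(1)[OF xX(3) yY(3)]
        by simp
      have gp: "gpath V E ?cs" unfolding gpath_def using dist sV succ by simp
      have cl: "{last ?cs, hd ?cs} \<in> E" using evu[OF yN(3)] by (simp add: insert_commute)
      have cyc: "is_cycle V E ?cs" using gpath_cycle[OF gp _ cl] by simp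
      have sub: "{y1,y2,y4,y3} \<subseteq> {u \<in> set ?cs. {x1,u} \<in> E}"
        using exy(1)[OF xX(1) yY(1)] exy(1)[OF xX(1) yY(2)] exy(1)[OF xX(1) yY(3)] exy(1)[OF xX(1) y4(1)]
        by simp
      have "card {y1,y2,y4,y3} = 4" using ys(2-4) y4n by simp
      moreover have "card {y1,y2,y4,y3} \<le> card {u \<in> set ?cs. {x1,u} \<in> E}"
        by (rule card_mono[OF _ sub]) simp
      ultimately have "card {u \<in> set ?cs. {x1,u} \<in> E} \<ge> 4" by linarith
      moreover have "x1 \<in> set ?cs" by simp
      ultimately have "has_cycle_two_adjacent_chords V E" using cycle_many_nbrs_bad[OF cyc] by blast
      then show ?thesis using nb by blast
    qed
  qed
qed

lemma card_Kbip: "card (Kbip_E 3 m) = 3 * m"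
proof -
  let ?g = "\<lambda>(i::nat, j::nat). {i, j}"
  have K: "Kbip_E 3 m = ?g ` ({0..<3} \<times> {3..<3+m})"
  proof
    show "Kbip_E 3 m \<subseteq> ?g ` ({0..<3} \<times> {3..<3+m})"
    proof
      fix k assume "k \<in> Kbip_E 3 m"
      then obtain i j where ij: "k = {i,j}" "i < 3" "3 \<le> j" "j < 3 + m" unfolding Kbip_E_def by blast
      then have "(i,j) \<in> {0..<3} \<times> {3..<3+m}" by simp
      moreover have "k = ?g (i,j)" using ij(1) by simp
      ultimately show "k \<in> ?g ` ({0..<3} \<times> {3..<3+m})" by (rule rev_image_eqI)
    qed
  next
    show "?g ` ({0..<3} \<times> {3..<3+m}) \<subseteq> Kbip_E 3 m"
    proof
      fix k assume "k \<in> ?g ` ({0..<3} \<times> {3..<3+m})"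
      then obtain i j where ij: "(i,j) \<in> {0..<3} \<times> {3..<3+m}" "k = {i,j}" by auto
      then show "k \<in> Kbip_E 3 m" unfolding Kbip_E_def by auto
    qed
  qed
  have inj: "inj_on ?g ({0..<3} \<times> {3..<3+m})"
  proof (rule inj_onI)
    fix a b assume a: "a \<in> {0..<3::nat} \<times> {3..<3+m}" and b: "b \<in> {0..<3::nat} \<times> {3..<3+m}"
      and e: "?g a = ?g b"
    obtain i j where aij: "a = (i,j)" by (cases a)
    obtain i' j' where bij: "b = (i',j')" by (cases b)
    have r: "i < 3" "3 \<le> j" "i' < 3" "3 \<le> j'" using a b aij bij by auto
    have "{i,j} = {i',j'}" using e aij bij by simp
    then have "(i = i' \<and> j = j') \<or> (i = j' \<and> j = i')" by (simp add: doubleton_eq_iff)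
    then have "i = i' \<and> j = j'" using r by auto
    then show "a = b" using aij bij by simp
  qed
  have "card (Kbip_E 3 m) = card ({0..<3::nat} \<times> {3..<3+m})" unfolding K by (rule card_image[OF inj])
  also have "\<dots> = 3 * m" by (simp add: card_cartesian_product)
  finally show ?thesis .
qed

lemma iso_card:
  assumes g: "simple_graph V E" and iso: "graph_iso V E (Kbip_V 3 m) (Kbip_E 3 m)"
  shows "card E = 3 * m"
proof -
  obtain f where bij: "bij_betw f V {0..<3+m}"
    and H: "\<forall>u\<in>V. \<forall>w\<in>V. {u, w} \<in> E \<longleftrightarrow> {f u, f w} \<in> Kbip_E 3 m"
    using iso unfolding graph_iso_def Kbip_V_def by blast
  have injf: "inj_on f V" using bij unfolding bij_betw_def by blast
  have imf: "f ` V = {0..<3+m}" using bij unfolding bij_betw_def by blast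
  let ?F = "\<lambda>e. f ` e"
  have img: "?F ` E = Kbip_E 3 m"
  proof
    show "?F ` E \<subseteq> Kbip_E 3 m"
    proof
      fix k assume "k \<in> ?F ` E"
      then obtain e where e: "e \<in> E" "k = f ` e" by blast
      obtain x y where xy: "e = {x,y}" "x \<noteq> y" using edge_form[OF g e(1)] by blast
      have xV: "x \<in> V" and yV: "y \<in> V" using edge_facts[OF g] e(1) xy(1) by blast+
      have "{f x, f y} \<in> Kbip_E 3 m" using H xV yV e(1) xy(1) by blast
      moreover have "k = {f x, f y}" using e(2) xy(1) by simp
      ultimately show "k \<in> Kbip_E 3 m" by simp
    qed
  next
    show "Kbip_E 3 m \<subseteq> ?F ` E"
    proof
      fix k assume "k \<in> Kbip_E 3 m"
      then obtain i j where ij: "k = {i,j}" "i < 3" "3 \<le> j" "j < 3 + m" unfolding Kbip_E_def by blast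
      have "i \<in> f ` V" "j \<in> f ` V" using imf ij by auto
      then obtain x y where xy: "x \<in> V" "i = f x" "y \<in> V" "j = f y" by blast
      have "{f x, f y} \<in> Kbip_E 3 m" using \<open>k \<in> Kbip_E 3 m\<close> ij(1) xy by simp
      then have "{x,y} \<in> E" using H xy(1,3) by blast
      moreover have "k = f ` {x,y}" using ij(1) xy by simp
      ultimately show "k \<in> ?F ` E" by blast
    qed
  qed
  have "inj_on ?F E"
  proof (rule inj_onI)
    fix e1 e2 assume "e1 \<in> E" "e2 \<in> E" "f ` e1 = f ` e2"
    moreover have "e1 \<subseteq> V" "e2 \<subseteq> V" using g \<open>e1 \<in> E\<close> \<open>e2 \<in> E\<close> unfolding simple_graph_def by auto
    ultimately show "e1 = e2" using inj_on_image_eq_iff[OF injf] by blast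
  qed
  then have "card E = card (?F ` E)" by (simp add: card_image)
  then show ?thesis using img card_Kbip by simp
qed

lemma cbip_iso:
  assumes g: "simple_graph V E" and cV: "card V = n" and n3: "n \<ge> 3" and cb: "cbip V E X"
  shows "graph_iso V E (Kbip_V 3 (n - 3)) (Kbip_E 3 (n - 3))"
proof -
  have XV: "X \<subseteq> V" and cX: "card X = 3" and EX: "E = {{x,y} | x y. x \<in> X \<and> y \<in> V - X}"
    using cb unfolding cbip_def by blast+
  have fV: "finite V" using g unfolding simple_graph_def by blast
  have fX: "finite X" using finite_subset[OF XV fV] .
  have cVX: "card (V - X) = card {3..<n}" using card_Diff_subset[OF fX XV] cV cX by simp
  have cX3: "card X = card {0..<3::nat}" using cX by simp
  obtain g1 where g1: "bij_betw g1 X {0..<3::nat}" using finite_same_card_bij[OF fX finite_atLeastLessThan cX3] by blast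
  have fVX: "finite (V - X)" using fV by simp
  obtain g2 where g2: "bij_betw g2 (V - X) {3..<n}" using finite_same_card_bij[OF fVX finite_atLeastLessThan cVX] by blast
  define f where "f u = (if u \<in> X then g1 u else g2 u)" for u
  have b1: "bij_betw f X {0..<3}" using g1 bij_betw_cong[of X f g1 "{0..<3}"] unfolding f_def by simp
  have b2: "bij_betw f (V - X) {3..<n}" using g2 bij_betw_cong[of "V - X" f g2 "{3..<n}"] unfolding f_def by simp
  have b: "bij_betw f (X \<union> (V - X)) ({0..<3} \<union> {3..<n})" by (rule bij_betw_combine[OF b1 b2]) auto
  have u1: "X \<union> (V - X) = V" using XV by blast
  have u2: "{0..<3} \<union> {3..<n} = {0..<n}" using n3 by auto
  have KV: "Kbip_V 3 (n - 3) = {0..<n}" unfolding Kbip_V_def using n3 by simp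
  have bij: "bij_betw f V (Kbip_V 3 (n - 3))" using b unfolding u1 u2 KV .
  have fx: "f u < 3" if "u \<in> X" for u using bij_betw_apply[OF b1 that] by simp
  have fy: "3 \<le> f u \<and> f u < n" if "u \<in> V - X" for u using bij_betw_apply[OF b2 that] by simp
  have lhs: "{u,w} \<in> E \<longleftrightarrow> (u \<in> X \<and> w \<notin> X) \<or> (w \<in> X \<and> u \<notin> X)" if "u \<in> V" "w \<in> V" for u w
  proof
    assume "{u,w} \<in> E"
    then obtain x y where xy: "{u,w} = {x,y}" "x \<in> X" "y \<in> V - X" unfolding EX by (rule memE2)
    from xy(1) have "(u = x \<and> w = y) \<or> (u = y \<and> w = x)" by (simp add: doubleton_eq_iff)
    then show "(u \<in> X \<and> w \<notin> X) \<or> (w \<in> X \<and> u \<notin> X)" using xy(2,3) by blast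
  next
    assume "(u \<in> X \<and> w \<notin> X) \<or> (w \<in> X \<and> u \<notin> X)"
    then show "{u,w} \<in> E"
    proof
      assume h: "u \<in> X \<and> w \<notin> X"
      have "w \<in> V - X" using h that by blast
      then show ?thesis unfolding EX using h by (intro memI2[OF refl]) auto
    next
      assume h: "w \<in> X \<and> u \<notin> X"
      have "u \<in> V - X" using h that by blast
      then have "{w,u} \<in> E" unfolding EX using h by (intro memI2[OF refl]) auto
      then show ?thesis by (simp add: insert_commute)
    qed
  qed
  have rhs: "{f u, f w} \<in> Kbip_E 3 (n - 3) \<longleftrightarrow> (u \<in> X \<and> w \<notin> X) \<or> (w \<in> X \<and> u \<notin> X)"
    if "u \<in> V" "w \<in> V" for u w
  proof -
    have cu: "f u < 3 \<longleftrightarrow> u \<in> X" using fx fy that by fastforce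
    have cw: "f w < 3 \<longleftrightarrow> w \<in> X" using fx fy that by fastforce
    have bu: "f u < n" and bw: "f w < n" using fx fy that n3 by (fastforce, fastforce)
    have n33: "3 + (n - 3) = n" using n3 by simp
    have "{f u, f w} \<in> Kbip_E 3 (n - 3) \<longleftrightarrow>
          (\<exists>i j. {f u, f w} = {i,j} \<and> i < 3 \<and> 3 \<le> j \<and> j < n)"
      by (simp only: Kbip_E_def n33 mem_Collect_eq)
    also have "\<dots> \<longleftrightarrow> (f u < 3 \<and> \<not> f w < 3) \<or> (f w < 3 \<and> \<not> f u < 3)"
    proof
      assume "\<exists>i j. {f u, f w} = {i,j} \<and> i < 3 \<and> 3 \<le> j \<and> j < n"
      then obtain i j where ij: "{f u, f w} = {i,j}" "i < 3" "3 \<le> j" by blast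
      from ij(1) have "(f u = i \<and> f w = j) \<or> (f u = j \<and> f w = i)" by (simp add: doubleton_eq_iff)
      then show "(f u < 3 \<and> \<not> f w < 3) \<or> (f w < 3 \<and> \<not> f u < 3)" using ij(2,3) by auto
    next
      assume "(f u < 3 \<and> \<not> f w < 3) \<or> (f w < 3 \<and> \<not> f u < 3)"
      then show "\<exists>i j. {f u, f w} = {i,j} \<and> i < 3 \<and> 3 \<le> j \<and> j < n"
      proof
        assume h: "f u < 3 \<and> \<not> f w < 3"
        show ?thesis by (rule exI[of _ "f u"], rule exI[of _ "f w"]) (use h bw in simp)
      next
        assume h: "f w < 3 \<and> \<not> f u < 3"
        show ?thesis by (rule exI[of _ "f w"], rule exI[of _ "f u"]) (use h bu in \<open>simp add: insert_commute\<close>)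
      qed
    qed
    finally show ?thesis using cu cw by simp
  qed
  have "\<forall>u\<in>V. \<forall>w\<in>V. {u, w} \<in> E \<longleftrightarrow> {f u, f w} \<in> Kbip_E 3 (n - 3)"
    using lhs rhs by simp
  then show ?thesis unfolding graph_iso_def using bij by blast
qed

theorem lemma4p1:
  fixes V :: "'a set" and E :: "'a set set" and n :: nat
  assumes "simple_graph V E"
    and "card V = n"
    and "n \<ge> 6"
    and "\<not> has_cycle_two_adjacent_chords V E"
  shows "card E \<le> 3 * n - 9 \<and> (bipartite V E \<longrightarrow>
           (card E = 3 * n - 9 \<longleftrightarrow> graph_iso V E (Kbip_V 3 (n - 3)) (Kbip_E 3 (n - 3))))"
proof -
  have bnd: "card E \<le> 3 * n - 9" by (rule main_bound[OF assms(3) assms(1) assms(2) assms(4)])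
  have "bipartite V E \<longrightarrow>
           (card E = 3 * n - 9 \<longleftrightarrow> graph_iso V E (Kbip_V 3 (n - 3)) (Kbip_E 3 (n - 3)))"
  proof
    assume bp: "bipartite V E"
    show "card E = 3 * n - 9 \<longleftrightarrow> graph_iso V E (Kbip_V 3 (n - 3)) (Kbip_E 3 (n - 3))"
    proof
      assume "card E = 3 * n - 9"
      then obtain X where X: "cbip V E X" using bip_all[OF assms(3) assms(1) assms(2) assms(4) bp] by blast
      have n3: "n \<ge> 3" using assms(3) by simp
      show "graph_iso V E (Kbip_V 3 (n - 3)) (Kbip_E 3 (n - 3))" by (rule cbip_iso[OF assms(1) assms(2) n3 X])
    next
      assume "graph_iso V E (Kbip_V 3 (n - 3)) (Kbip_E 3 (n - 3))"
      then have "card E = 3 * (n - 3)" by (rule iso_card[OF assms(1)])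
      then show "card E = 3 * n - 9" by (simp add: diff_mult_distrib2)
    qed
  qed
  then show ?thesis using bnd by (intro conjI)
qed

end
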